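(* Let $M$ be a graded $R$-module. The set $\beta=\{GX_r^{qp.M}\mid r\in h(R)\}$ forms a base for the quasi-Zariski topology on $qp.Spec_g(M)$.
   Context: $R=\bigoplus_{g\in G}R_g$ is a graded commutative ring with identity graded by a group $G$, $h(R)=\bigcup_g R_g$; $M$ is a graded $R$-module, $h(M)$ its homogeneous elements. $Gr(I)$ is the graded radical of a graded ideal $I$. $(K:_RM)=\{r: rM\subseteq K\}$. Graded prime submodule: proper graded $P$ with $rm\in P$ ($r\in h(R), m\in h(M)$) implying $m\in P$ or $r\in(P:_RM)$. $Gr_M(K)$: intersection of graded prime submodules containing $K$ ($M$ if none). Graded primeful property of $K$: for each graded prime $p\supseteq(K:_RM)$ there is a graded prime submodule $P\supseteq K$ with $(P:_RM)=p$. Graded quasi-primary submodule: proper graded $Q$ with $rm\in Q$ ($r\in h(R),m\in h(M)$) implying $r\in Gr((Q:_RM))$ or $m\in Gr_M(Q)$. $qp.Spec_g(M)$: graded quasi-primary submodules with the graded primeful property. $qp\text{-}V_M^g(K)=\{Q\in qp.Spec_g(M): Gr((Q:_RM))\supseteq Gr((K:_RM))\}$; the quasi-Zariski topology has closed sets exactly these. For $r\in h(R)$, $GX_r^{qp.M}=qp.Spec_g(M)\setminus qp\text{-}V_M^g(rM)$. *)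

theory Defs
  imports Main "HOL.Modules"
begin

text \<open>The ring R is the whole carrier of a type 'r::comm_ring_1, graded by a
group G (type 'g::group_add, operation written +) via RG g = R_g. The module M is the whole
carrier of a type 'm::ab_group_add with scalar multiplication scale, graded via MG g = M_g.\<close>

definition fin_decomp :: "('g \<Rightarrow> 'a::comm_monoid_add set) \<Rightarrow> 'a \<Rightarrow> ('g \<Rightarrow> 'a) \<Rightarrow> bool" where
  "fin_decomp AG x c \<longleftrightarrow> finite {g. c g \<noteq> 0} \<and> (\<forall>g. c g \<in> AG g) \<and> x = sum c {g. c g \<noteq> 0}"

definition additive_subgroup :: "'a::ab_group_add set \<Rightarrow> bool" where
  "additive_subgroup A \<longleftrightarrow> 0 \<in> A \<and> (\<forall>a\<in>A. \<forall>b\<in>A. a + b \<in> A \<and> - a \<in> A)"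

definition graded_ring :: "('g::group_add \<Rightarrow> 'r::comm_ring_1 set) \<Rightarrow> bool" where
  "graded_ring RG \<longleftrightarrow> (\<forall>g. additive_subgroup (RG g))
     \<and> (\<forall>g h. \<forall>a\<in>RG g. \<forall>b\<in>RG h. a * b \<in> RG (g + h))
     \<and> (\<forall>x. \<exists>!c. fin_decomp RG x c)"

definition graded_module :: "('g::group_add \<Rightarrow> 'r::comm_ring_1 set) \<Rightarrow> ('r \<Rightarrow> 'm::ab_group_add \<Rightarrow> 'm) \<Rightarrow> ('g \<Rightarrow> 'm set) \<Rightarrow> bool" where
  "graded_module RG scale MG \<longleftrightarrow> module scale \<and> (\<forall>g. additive_subgroup (MG g))
     \<and> (\<forall>g h. \<forall>a\<in>RG g. \<forall>m\<in>MG h. scale a m \<in> MG (g + h))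
     \<and> (\<forall>x. \<exists>!c. fin_decomp MG x c)"

definition homog :: "('g \<Rightarrow> 'a set) \<Rightarrow> 'a set" where
  "homog AG = (\<Union>g. AG g)"

definition is_ideal :: "'r::comm_ring_1 set \<Rightarrow> bool" where
  "is_ideal I \<longleftrightarrow> 0 \<in> I \<and> (\<forall>a\<in>I. \<forall>b\<in>I. a + b \<in> I) \<and> (\<forall>r. \<forall>a\<in>I. r * a \<in> I)"

definition graded_ideal :: "('g \<Rightarrow> 'r::comm_ring_1 set) \<Rightarrow> 'r set \<Rightarrow> bool" where
  "graded_ideal RG I \<longleftrightarrow> is_ideal I \<and> (\<forall>x\<in>I. \<forall>c. fin_decomp RG x c \<longrightarrow> (\<forall>g. c g \<in> I))"

definition graded_prime_ideal :: "('g \<Rightarrow> 'r::comm_ring_1 set) \<Rightarrow> 'r set \<Rightarrow> bool" where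
  "graded_prime_ideal RG p \<longleftrightarrow> graded_ideal RG p \<and> p \<noteq> UNIV
     \<and> (\<forall>a\<in>homog RG. \<forall>b\<in>homog RG. a * b \<in> p \<longrightarrow> a \<in> p \<or> b \<in> p)"

definition graded_radical :: "('g \<Rightarrow> 'r::comm_ring_1 set) \<Rightarrow> 'r set \<Rightarrow> 'r set" where
  "graded_radical RG I = {x. \<forall>c. fin_decomp RG x c \<longrightarrow> (\<forall>g. \<exists>n. c g ^ n \<in> I)}"

definition is_submodule :: "('r::comm_ring_1 \<Rightarrow> 'm::ab_group_add \<Rightarrow> 'm) \<Rightarrow> 'm set \<Rightarrow> bool" where
  "is_submodule scale N \<longleftrightarrow> 0 \<in> N \<and> (\<forall>a\<in>N. \<forall>b\<in>N. a + b \<in> N) \<and> (\<forall>r. \<forall>a\<in>N. scale r a \<in> N)"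

definition graded_submodule :: "('r::comm_ring_1 \<Rightarrow> 'm::ab_group_add \<Rightarrow> 'm) \<Rightarrow> ('g \<Rightarrow> 'm set) \<Rightarrow> 'm set \<Rightarrow> bool" where
  "graded_submodule scale MG N \<longleftrightarrow> is_submodule scale N
     \<and> (\<forall>x\<in>N. \<forall>c. fin_decomp MG x c \<longrightarrow> (\<forall>g. c g \<in> N))"

definition colon :: "('r \<Rightarrow> 'm \<Rightarrow> 'm) \<Rightarrow> 'm set \<Rightarrow> 'r set" where
  "colon scale K = {r. \<forall>m. scale r m \<in> K}"

definition graded_prime_submodule ::
  "('g \<Rightarrow> 'r::comm_ring_1 set) \<Rightarrow> ('r \<Rightarrow> 'm::ab_group_add \<Rightarrow> 'm) \<Rightarrow> ('g \<Rightarrow> 'm set) \<Rightarrow> 'm set \<Rightarrow> bool" where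
  "graded_prime_submodule RG scale MG P \<longleftrightarrow> graded_submodule scale MG P \<and> P \<noteq> UNIV
     \<and> (\<forall>r\<in>homog RG. \<forall>m\<in>homog MG. scale r m \<in> P \<longrightarrow> m \<in> P \<or> r \<in> colon scale P)"

definition graded_radical_mod ::
  "('g \<Rightarrow> 'r::comm_ring_1 set) \<Rightarrow> ('r \<Rightarrow> 'm::ab_group_add \<Rightarrow> 'm) \<Rightarrow> ('g \<Rightarrow> 'm set) \<Rightarrow> 'm set \<Rightarrow> 'm set" where
  "graded_radical_mod RG scale MG K =
     (if \<exists>P. graded_prime_submodule RG scale MG P \<and> K \<subseteq> P
      then \<Inter>{P. graded_prime_submodule RG scale MG P \<and> K \<subseteq> P} else UNIV)"

definition graded_primeful ::
  "('g \<Rightarrow> 'r::comm_ring_1 set) \<Rightarrow> ('r \<Rightarrow> 'm::ab_group_add \<Rightarrow> 'm) \<Rightarrow> ('g \<Rightarrow> 'm set) \<Rightarrow> 'm set \<Rightarrow> bool" where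
  "graded_primeful RG scale MG K \<longleftrightarrow>
     (\<forall>p. graded_prime_ideal RG p \<and> colon scale K \<subseteq> p \<longrightarrow>
        (\<exists>P. graded_prime_submodule RG scale MG P \<and> K \<subseteq> P \<and> colon scale P = p))"

definition graded_quasi_primary ::
  "('g \<Rightarrow> 'r::comm_ring_1 set) \<Rightarrow> ('r \<Rightarrow> 'm::ab_group_add \<Rightarrow> 'm) \<Rightarrow> ('g \<Rightarrow> 'm set) \<Rightarrow> 'm set \<Rightarrow> bool" where
  "graded_quasi_primary RG scale MG Q \<longleftrightarrow> graded_submodule scale MG Q \<and> Q \<noteq> UNIV
     \<and> (\<forall>r\<in>homog RG. \<forall>m\<in>homog MG. scale r m \<in> Q \<longrightarrow>
          r \<in> graded_radical RG (colon scale Q) \<or> m \<in> graded_radical_mod RG scale MG Q)"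

definition qp_spec ::
  "('g \<Rightarrow> 'r::comm_ring_1 set) \<Rightarrow> ('r \<Rightarrow> 'm::ab_group_add \<Rightarrow> 'm) \<Rightarrow> ('g \<Rightarrow> 'm set) \<Rightarrow> 'm set set" where
  "qp_spec RG scale MG = {Q. graded_quasi_primary RG scale MG Q \<and> graded_primeful RG scale MG Q}"

definition qp_V ::
  "('g \<Rightarrow> 'r::comm_ring_1 set) \<Rightarrow> ('r \<Rightarrow> 'm::ab_group_add \<Rightarrow> 'm) \<Rightarrow> ('g \<Rightarrow> 'm set) \<Rightarrow> 'm set \<Rightarrow> 'm set set" where
  "qp_V RG scale MG K = {Q \<in> qp_spec RG scale MG.
      graded_radical RG (colon scale K) \<subseteq> graded_radical RG (colon scale Q)}"

definition qz_open ::
  "('g \<Rightarrow> 'r::comm_ring_1 set) \<Rightarrow> ('r \<Rightarrow> 'm::ab_group_add \<Rightarrow> 'm) \<Rightarrow> ('g \<Rightarrow> 'm set) \<Rightarrow> 'm set set set" where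
  "qz_open RG scale MG = {qp_spec RG scale MG - qp_V RG scale MG K | K. graded_submodule scale MG K}"

definition GX ::
  "('g \<Rightarrow> 'r::comm_ring_1 set) \<Rightarrow> ('r \<Rightarrow> 'm::ab_group_add \<Rightarrow> 'm) \<Rightarrow> ('g \<Rightarrow> 'm set) \<Rightarrow> 'r \<Rightarrow> 'm set set" where
  "GX RG scale MG r = qp_spec RG scale MG - qp_V RG scale MG (range (scale r))"

definition is_base_for :: "'a set set \<Rightarrow> 'a set set \<Rightarrow> bool" where
  "is_base_for B Opens \<longleftrightarrow> B \<subseteq> Opens \<and> (\<forall>U\<in>Opens. \<exists>B'. B' \<subseteq> B \<and> U = \<Union>B')"

end

theory Submission
  imports Defs
begin

lemma homog_decomp:
  assumes GR: "graded_ring RG" and r: "r \<in> RG h"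
  shows "fin_decomp RG r (\<lambda>g. if g = h then r else 0)"
proof -
  have z: "\<And>g. 0 \<in> RG g" using GR unfolding graded_ring_def additive_subgroup_def by blast
  have "{g. (if g = h then r else 0) \<noteq> 0} = (if r = 0 then {} else {h})" by auto
  then show ?thesis unfolding fin_decomp_def using r z by auto
qed

lemma homog_decomp_unique:
  assumes GR: "graded_ring RG" and r: "r \<in> RG h" and c: "fin_decomp RG r c"
  shows "c = (\<lambda>g. if g = h then r else 0)"
proof -
  from GR have "\<exists>!c. fin_decomp RG r c" unfolding graded_ring_def by blast
  then show ?thesis using c homog_decomp[OF GR r] by blast
qed

lemma homog_pow:
  assumes GR: "graded_ring RG" and y: "y \<in> RG g"
  shows "\<exists>d. y ^ Suc k \<in> RG d"
proof (induction k)
  case 0 then show ?case using y by auto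
next
  case (Suc k)
  then obtain d where "y ^ Suc k \<in> RG d" by blast
  then have "y * y ^ Suc k \<in> RG (g + d)" using GR y unfolding graded_ring_def by blast
  then show ?case by auto
qed

lemma rM_graded:
  assumes GM: "graded_module RG scale MG" and r: "r \<in> RG h"
  shows "graded_submodule scale MG (range (scale r))"
proof -
  have md: "module scale" using GM unfolding graded_module_def by blast
  have z: "\<And>g. 0 \<in> MG g" using GM unfolding graded_module_def additive_subgroup_def by blast
  have mul: "\<And>a m g k. a \<in> RG g \<Longrightarrow> m \<in> MG k \<Longrightarrow> scale a m \<in> MG (g + k)"
    using GM unfolding graded_module_def by blast
  have uq: "\<And>x. \<exists>!c. fin_decomp MG x c" using GM unfolding graded_module_def by blast
  have sub: "is_submodule scale (range (scale r))"
    unfolding is_submodule_def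
  proof (intro conjI ballI allI)
    show "0 \<in> range (scale r)" using module.scale_zero_right[OF md] by (metis rangeI)
  next
    fix a b assume "a \<in> range (scale r)" "b \<in> range (scale r)"
    then obtain x y where "a = scale r x" "b = scale r y" by auto
    then show "a + b \<in> range (scale r)" using module.scale_right_distrib[OF md] by (metis rangeI)
  next
    fix s a assume "a \<in> range (scale r)"
    then obtain x where "a = scale r x" by auto
    then have "scale s a = scale r (scale s x)"
      using module.scale_left_commute[OF md] by metis
    then show "scale s a \<in> range (scale r)" by simp
  qed
  have comp: "c g \<in> range (scale r)" if x: "x \<in> range (scale r)" and c: "fin_decomp MG x c" for x c g
  proof -
    obtain m where xm: "x = scale r m" using x by auto
    obtain d where d: "fin_decomp MG m d" using uq by blast
    define S where "S = {k. d k \<noteq> 0}"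
    have fS: "finite S" and dk: "\<And>k. d k \<in> MG k" and ms: "m = sum d S"
      using d unfolding fin_decomp_def S_def by auto
    define c' where "c' = (\<lambda>g'. scale r (d (- h + g')))"
    have supp: "{g'. c' g' \<noteq> 0} \<subseteq> (\<lambda>k. h + k) ` S"
    proof
      fix g' assume "g' \<in> {g'. c' g' \<noteq> 0}"
      then have "d (- h + g') \<noteq> 0" unfolding c'_def using module.scale_zero_right[OF md] by auto
      moreover have "g' = h + (- h + g')" by (simp add: add.assoc[symmetric])
      ultimately show "g' \<in> (\<lambda>k. h + k) ` S" unfolding S_def by blast
    qed
    have fin: "finite ((\<lambda>k. h + k) ` S)" using fS by simp
    have "sum c' {g'. c' g' \<noteq> 0} = sum c' ((\<lambda>k. h + k) ` S)"
      by (rule sum.mono_neutral_left[OF fin supp]) auto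
    also have "\<dots> = sum (c' \<circ> (\<lambda>k. h + k)) S"
      by (rule sum.reindex) (simp add: inj_on_def)
    also have "\<dots> = sum (\<lambda>k. scale r (d k)) S"
      unfolding c'_def by (simp add: add.assoc[symmetric])
    also have "\<dots> = scale r m" using ms module.scale_sum_right[OF md] by metis
    finally have s: "sum c' {g'. c' g' \<noteq> 0} = x" using xm by simp
    have inM: "\<And>g'. c' g' \<in> MG g'"
    proof -
      fix g'
      have "scale r (d (- h + g')) \<in> MG (h + (- h + g'))" using mul[OF r dk] .
      then show "c' g' \<in> MG g'" unfolding c'_def by (simp add: add.assoc[symmetric])
    qed
    have "fin_decomp MG x c'" unfolding fin_decomp_def
      using s inM finite_subset[OF supp fin] by auto
    then have "c = c'" using c uq by blast
    then show ?thesis unfolding c'_def by simp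
  qed
  show ?thesis unfolding graded_submodule_def using sub comp by blast
qed

lemma Gr_mono:
  "I \<subseteq> J \<Longrightarrow> graded_radical RG I \<subseteq> graded_radical RG J"
  unfolding graded_radical_def by blast

theorem theorem3p14:
  fixes RG :: "'g::group_add \<Rightarrow> 'r::comm_ring_1 set"
    and scale :: "'r \<Rightarrow> 'm::ab_group_add \<Rightarrow> 'm"
    and MG :: "'g \<Rightarrow> 'm set"
  assumes "graded_ring RG"
    and "graded_module RG scale MG"
  shows "is_base_for {GX RG scale MG r | r. r \<in> homog RG} (qz_open RG scale MG)"
proof -
  note GR = assms(1) and GM = assms(2)
  have md: "module scale" using GM unfolding graded_module_def by blast
  have B: "{GX RG scale MG r | r. r \<in> homog RG} \<subseteq> qz_open RG scale MG"
  proof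
    fix U assume "U \<in> {GX RG scale MG r | r. r \<in> homog RG}"
    then obtain r h where U: "U = GX RG scale MG r" and r: "r \<in> RG h" unfolding homog_def by blast
    show "U \<in> qz_open RG scale MG" unfolding qz_open_def U GX_def
      using rM_graded[OF GM r] by blast
  qed
  have C: "\<exists>B'. B' \<subseteq> {GX RG scale MG r | r. r \<in> homog RG} \<and> U = \<Union>B'"
    if UO: "U \<in> qz_open RG scale MG" for U
  proof -
    obtain K where U: "U = qp_spec RG scale MG - qp_V RG scale MG K"
      using UO unfolding qz_open_def by blast
    define B' where "B' = {GX RG scale MG r | r. r \<in> homog RG \<and> r \<in> colon scale K}"
    have "U = \<Union>B'"
    proof
      show "\<Union>B' \<subseteq> U"
      proof
        fix Q assume "Q \<in> \<Union>B'"
        then obtain r where r: "r \<in> colon scale K" and Q: "Q \<in> GX RG scale MG r"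
          unfolding B'_def by blast
        have "colon scale (range (scale r)) \<subseteq> colon scale K"
        proof
          fix s assume "s \<in> colon scale (range (scale r))"
          show "s \<in> colon scale K" unfolding colon_def
          proof (intro CollectI allI)
            fix m
            have "scale s m \<in> range (scale r)" using \<open>s \<in> colon scale (range (scale r))\<close>
              unfolding colon_def by blast
            then obtain m' where "scale s m = scale r m'" by blast
            then show "scale s m \<in> K" using r unfolding colon_def by simp
          qed
        qed
        then have "graded_radical RG (colon scale (range (scale r))) \<subseteq> graded_radical RG (colon scale K)"
          by (rule Gr_mono)
        then show "Q \<in> U" using Q unfolding U GX_def qp_V_def by auto
      qed
    next
      show "U \<subseteq> \<Union>B'"
      proof
        fix Q assume QU: "Q \<in> U"
        show "Q \<in> \<Union>B'"
        proof (rule ccontr)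
          assume nQ: "Q \<notin> \<Union>B'"
          have QS: "Q \<in> qp_spec RG scale MG" using QU U by auto
          have key: "\<exists>k. r ^ k \<in> colon scale Q" if rh: "r \<in> RG h" and rK: "r \<in> colon scale K" for r h
          proof -
            have "r \<in> homog RG" using rh unfolding homog_def by blast
            then have "Q \<notin> GX RG scale MG r" using nQ rK unfolding B'_def by blast
            then have sub: "graded_radical RG (colon scale (range (scale r))) \<subseteq> graded_radical RG (colon scale Q)"
              using QS unfolding GX_def qp_V_def by auto
            have "r \<in> graded_radical RG (colon scale (range (scale r)))"
              unfolding graded_radical_def
            proof (intro CollectI allI impI)
              fix c g assume "fin_decomp RG r c"
              then have c: "c = (\<lambda>g. if g = h then r else 0)" by (rule homog_decomp_unique[OF GR rh])
              have "c g ^ 1 \<in> colon scale (range (scale r))"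
              proof (cases "g = h")
                case True then show ?thesis unfolding c colon_def by simp
              next
                case False
                have "\<forall>m. scale 0 m = scale r 0"
                  using module.scale_zero_left[OF md] module.scale_zero_right[OF md] by simp
                then show ?thesis using False unfolding c colon_def by (simp add: range_eqI)
              qed
              then show "\<exists>n. c g ^ n \<in> colon scale (range (scale r))" by blast
            qed
            then have "r \<in> graded_radical RG (colon scale Q)" using sub by blast
            then have "\<forall>g. \<exists>n. (\<lambda>g. if g = h then r else 0) g ^ n \<in> colon scale Q"
              unfolding graded_radical_def using homog_decomp[OF GR rh] by blast
            then have "\<exists>n. (\<lambda>g. if g = h then r else 0) h ^ n \<in> colon scale Q" by blast
            then show ?thesis by simp
          qed
          have "graded_radical RG (colon scale K) \<subseteq> graded_radical RG (colon scale Q)"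
          proof
            fix x assume x: "x \<in> graded_radical RG (colon scale K)"
            show "x \<in> graded_radical RG (colon scale Q)"
              unfolding graded_radical_def
            proof (intro CollectI allI impI)
              fix c g assume c: "fin_decomp RG x c"
              then obtain n where n: "c g ^ n \<in> colon scale K" using x unfolding graded_radical_def by blast
              have cg: "c g \<in> RG g" using c unfolding fin_decomp_def by blast
              obtain k where k: "c g ^ Suc k \<in> colon scale K"
              proof (cases n)
                case 0
                then have "1 \<in> colon scale K" using n by simp
                then have "\<forall>m. m \<in> K" unfolding colon_def using module.scale_one[OF md] by simp
                then have "c g ^ Suc 0 \<in> colon scale K" unfolding colon_def by blast
                then show ?thesis using that by blast
              next
                case (Suc k) then show ?thesis using that n by blast
              qed
              obtain d where d: "c g ^ Suc k \<in> RG d" using homog_pow[OF GR cg] by blast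
              obtain j where "(c g ^ Suc k) ^ j \<in> colon scale Q" using key[OF d k] by blast
              then have "c g ^ (Suc k * j) \<in> colon scale Q" by (simp only: power_mult)
              then show "\<exists>n. c g ^ n \<in> colon scale Q" by blast
            qed
          qed
          moreover have "Q \<notin> qp_V RG scale MG K" using QU U by blast
          ultimately show False using QS unfolding qp_V_def by blast
        qed
      qed
    qed
    moreover have "B' \<subseteq> {GX RG scale MG r | r. r \<in> homog RG}" unfolding B'_def by blast
    ultimately show ?thesis by blast
  qed
  show ?thesis unfolding is_base_for_def using B C by blast
qed

end
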